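(* Let $k\ge1$, let $a\ge b$ be the dimensions of irreducible algebraic sets $A,B\subset\mathbb{C}^k$, put $m=2k-a-b$, and let $h^*,h_0$ be integers with $b\ge h^*>\dim(A\cap B)$ and $\max(a+b-k,0)\le h_0\le$ the minimum dimension of any irreducible component of $A\cap B$. Let $\mathbb A,\mathbf B\in\mathbb{C}^{(a+b)\times k}$, $\mathbf C\in\mathbb{C}^{k\times 2k}$, $\mathbf d\in\mathbb{C}^k$ be generic, $\mathbf A=[\mathbb A\ \ -\mathbb A]$, $\mathbf Y_h=\mathbf A+\mathbf B\mathbf P_h\mathbf C$, and let $\epsilon\in\mathbb{C}^{2k}$ be the unique solution of $w_{1..k}-w_{k+1..2k}=0$, $\mathbf C w=-\mathbf d$ (so $\mathbf A\epsilon=0$ and $\mathbf C\epsilon+\mathbf d=0$). Fix $h_0\le j<i\le h^*$ and matrices $E\in\mathbb{C}^{2k\times(m-i+j)}$, $F,G\in\mathbb{C}^{2k\times(i-j)}$ such that the columns of $[E\ F]$ form a basis of $\ker\mathbf Y_i$, the columns of $[E\ G]$ form a basis of $\ker\mathbf Y_j$, and $\mathbf P_{ji}\mathbf CF=\mathbf P_{ji}\mathbf CG$ is the $k\times(i-j)$ matrix with $I_{i-j}$ in rows $j+1,\dots,i$ and zeros elsewhere. For $\gamma\in\mathbb{C}$, $t\in[0,1]$, $y\in\mathbb{C}^m$ define $$W_{i,j}(t,y)=\epsilon+\bigl[\,E\ \ \ tF+\gamma(1-t)G\,\bigr]y .$$ Then for all but finitely many $\gamma\in\mathbb{C}$ with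 $|\gamma|=1$, for every $t\in[0,1]$ there is $\tau\in\mathbb{C}$ (nonzero when $t\neq0$) such that the solution set in $\mathbb{C}^{2k}$ of the linear system $$\mathbf A w+\mathbf B(\mathbf P_j+\tau\mathbf P_{ji})(\mathbf C w+\mathbf d)=0$$ is exactly $\{W_{i,j}(t,y):y\in\mathbb{C}^m\}$.
   Context: $\mathbf P_h$ is the $k\times k$ diagonal matrix with $h$ ones followed by $k-h$ zeros; $\mathbf P_{ji}$ is the $k\times k$ diagonal matrix with $j$ zeros, then $i-j$ ones, then $k-i$ zeros. "Generic" means outside a proper algebraic subset of the parameter space (e.g. random complex entries). *)

theory Defs
  imports Complex_Main
begin

inductive polyfun :: "'v set \<Rightarrow> (('v \<Rightarrow> complex) \<Rightarrow> complex) \<Rightarrow> bool" for V where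
  const: "polyfun V (\<lambda>x. c)"
| var: "v \<in> V \<Longrightarrow> polyfun V (\<lambda>x. x v)"
| add: "polyfun V f \<Longrightarrow> polyfun V g \<Longrightarrow> polyfun V (\<lambda>x. f x + g x)"
| mult: "polyfun V f \<Longrightarrow> polyfun V g \<Longrightarrow> polyfun V (\<lambda>x. f x * g x)"

text \<open>C^n is represented by functions nat => complex vanishing from index n on.\<close>
definition cspace :: "nat \<Rightarrow> (nat \<Rightarrow> complex) set" where
  "cspace n = {x. \<forall>i\<ge>n. x i = 0}"

definition alg_set :: "nat \<Rightarrow> (nat \<Rightarrow> complex) set \<Rightarrow> bool" where
  "alg_set k V \<longleftrightarrow> (\<exists>S. (\<forall>f\<in>S. polyfun {..<k} f) \<and> V = {x \<in> cspace k. \<forall>f\<in>S. f x = 0})"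

definition irred_alg :: "nat \<Rightarrow> (nat \<Rightarrow> complex) set \<Rightarrow> bool" where
  "irred_alg k V \<longleftrightarrow> alg_set k V \<and> V \<noteq> {} \<and>
     (\<forall>V1 V2. alg_set k V1 \<and> alg_set k V2 \<and> V = V1 \<union> V2 \<longrightarrow> V = V1 \<or> V = V2)"

text \<open>Krull dimension: maximal length of a strict chain of irreducible algebraic subsets;
  the empty set has dimension -1.\<close>
definition alg_dim :: "nat \<Rightarrow> (nat \<Rightarrow> complex) set \<Rightarrow> int" where
  "alg_dim k V = (if V = {} then -1 else
     int (Max {n. \<exists>Z. (\<forall>l\<le>n. irred_alg k (Z l) \<and> Z l \<subseteq> V) \<and> (\<forall>l<n. Z l \<subset> Z (Suc l))}))"

definition irred_component :: "nat \<Rightarrow> (nat \<Rightarrow> complex) set \<Rightarrow> (nat \<Rightarrow> complex) set \<Rightarrow> bool" where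
  "irred_component k V Z \<longleftrightarrow> irred_alg k Z \<and> Z \<subseteq> V \<and>
     (\<forall>Z'. irred_alg k Z' \<and> Z \<subseteq> Z' \<and> Z' \<subseteq> V \<longrightarrow> Z' = Z)"

type_synonym cmat = "nat \<Rightarrow> nat \<Rightarrow> complex"
type_synonym cvec = "nat \<Rightarrow> complex"

definition mv :: "nat \<Rightarrow> cmat \<Rightarrow> cvec \<Rightarrow> cvec" where
  "mv n M w = (\<lambda>r. \<Sum>s<n. M r s * w s)"

definition Ablk :: "nat \<Rightarrow> cmat \<Rightarrow> cmat" where
  "Ablk k AA = (\<lambda>r s. if s < k then AA r s else - AA r (s - k))"

text \<open>Y_h = A + B P_h C, with B having k columns.\<close>
definition Ymat :: "nat \<Rightarrow> cmat \<Rightarrow> cmat \<Rightarrow> cmat \<Rightarrow> nat \<Rightarrow> cmat" where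
  "Ymat k AA BB CC h = (\<lambda>r s. Ablk k AA r s + (\<Sum>l<min h k. BB r l * CC l s))"

definition col :: "nat \<Rightarrow> cmat \<Rightarrow> nat \<Rightarrow> cvec" where
  "col n M c = (\<lambda>r. if r < n then M r c else 0)"

definition hcat_col :: "nat \<Rightarrow> nat \<Rightarrow> cmat \<Rightarrow> cmat \<Rightarrow> nat \<Rightarrow> cvec" where
  "hcat_col n p E F c = (if c < p then col n E c else col n F (c - p))"

definition ker_mat :: "nat \<Rightarrow> nat \<Rightarrow> cmat \<Rightarrow> cvec set" where
  "ker_mat rows n M = {w \<in> cspace n. \<forall>r<rows. mv n M w r = 0}"

definition is_basis_of :: "cvec set \<Rightarrow> (nat \<Rightarrow> cvec) \<Rightarrow> nat \<Rightarrow> bool" where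
  "is_basis_of K vs q \<longleftrightarrow> (\<forall>l<q. vs l \<in> K) \<and>
     (\<forall>c. (\<forall>r. (\<Sum>l<q. c l * vs l r) = 0) \<longrightarrow> (\<forall>l<q. c l = 0)) \<and>
     (\<forall>w\<in>K. \<exists>c. w = (\<lambda>r. \<Sum>l<q. c l * vs l r))"

text \<open>P_{ji} C F equals the k x (i-j) matrix with I_{i-j} in (0-based) rows j..i-1 and zeros
  elsewhere (F has 2k rows, i-j columns).\<close>
definition PCF_cond :: "nat \<Rightarrow> nat \<Rightarrow> nat \<Rightarrow> cmat \<Rightarrow> cmat \<Rightarrow> bool" where
  "PCF_cond k j i CC F \<longleftrightarrow> (\<forall>r<k. \<forall>c<i - j.
     (if j \<le> r \<and> r < i then (\<Sum>s<2*k. CC r s * F s c) else 0) = (if r = j + c then 1 else 0))"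

text \<open>Solution set in C^{2k} of A w + B (P_j + tau P_{ji}) (C w + d) = 0 (A, B have rows rows).\<close>
definition sol_set :: "nat \<Rightarrow> nat \<Rightarrow> cmat \<Rightarrow> cmat \<Rightarrow> cmat \<Rightarrow> cvec \<Rightarrow> nat \<Rightarrow> nat \<Rightarrow> complex \<Rightarrow> cvec set" where
  "sol_set k rows AA BB CC dd j i \<tau> = {w \<in> cspace (2*k). \<forall>r<rows.
     mv (2*k) (Ablk k AA) w r +
     (\<Sum>l<k. BB r l * (if l < j then 1 else if l < i then \<tau> else 0) * (mv (2*k) CC w l + dd l)) = 0}"

text \<open>W_{i,j}(t,y) = eps + [E  tF + gamma(1-t)G] y, with E having p columns, F, G having q columns.\<close>
definition Wfun :: "nat \<Rightarrow> nat \<Rightarrow> nat \<Rightarrow> cvec \<Rightarrow> cmat \<Rightarrow> cmat \<Rightarrow> cmat \<Rightarrow> complex \<Rightarrow> real \<Rightarrow> cvec \<Rightarrow> cvec" where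
  "Wfun n p q eps E F G \<gamma> t y = (\<lambda>r. if r < n then
      eps r + (\<Sum>c<p. E r c * y c) +
      (\<Sum>c<q. (of_real t * F r c + \<gamma> * of_real (1 - t) * G r c) * y (p + c))
    else 0)"

datatype pvar = VA nat nat | VB nat nat | VC nat nat | VD nat

definition generic :: "((pvar \<Rightarrow> complex) \<Rightarrow> bool) \<Rightarrow> bool" where
  "generic P \<longleftrightarrow> (\<exists>p. polyfun UNIV p \<and> (\<exists>\<sigma>. p \<sigma> \<noteq> 0) \<and> (\<forall>\<sigma>. p \<sigma> \<noteq> 0 \<longrightarrow> P \<sigma>))"

end

theory Submission
  imports Defs "Jordan_Normal_Form.Determinant"
begin


lemma polyfun_sum: "finite S \<Longrightarrow> (\<forall>s\<in>S. polyfun V (g s)) \<Longrightarrow> polyfun V (\<lambda>x. \<Sum>s\<in>S. g s x)"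
proof (induction S rule: finite_induct)
  case empty then show ?case by (simp add: polyfun.const)
next
  case (insert a S) then show ?case by (simp add: polyfun.add)
qed

lemma polyfun_prod: "finite S \<Longrightarrow> (\<forall>s\<in>S. polyfun V (g s)) \<Longrightarrow> polyfun V (\<lambda>x. \<Prod>s\<in>S. g s x)"
proof (induction S rule: finite_induct)
  case empty then show ?case by (simp add: polyfun.const)
next
  case (insert a S) then show ?case by (simp add: polyfun.mult)
qed

lemma det_polyfun: "polyfun UNIV (\<lambda>\<sigma>::'v\<Rightarrow>complex. det (mat q q (\<lambda>(r,c). \<sigma> (f r c))))"
proof -
  have eq: "det (mat q q (\<lambda>(r,c). \<sigma> (f r c))) =
     (\<Sum>p\<in>{p. p permutes {0..<q}}. signof p * (\<Prod>i\<in>{0..<q}. \<sigma> (f i (p i))))" for \<sigma> :: "'v\<Rightarrow>complex"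
  proof -
    have "det (mat q q (\<lambda>(r,c). \<sigma> (f r c))) = (\<Sum>p\<in>{p. p permutes {0..<q}}.
       signof p * (\<Prod>i = 0..<q. (mat q q (\<lambda>(r,c). \<sigma> (f r c))) $$ (i, p i)))"
      by (rule det_def') simp
    also have "\<dots> = (\<Sum>p\<in>{p. p permutes {0..<q}}. signof p * (\<Prod>i\<in>{0..<q}. \<sigma> (f i (p i))))"
    proof (rule sum.cong[OF refl])
      fix p assume "p \<in> {p. p permutes {0..<q}}"
      then have "\<forall>i<q. p i < q" using permutes_in_image by fastforce
      then show "signof p * (\<Prod>i = 0..<q. (mat q q (\<lambda>(r,c). \<sigma> (f r c))) $$ (i, p i)) =
          signof p * (\<Prod>i\<in>{0..<q}. \<sigma> (f i (p i)))"
        by (auto intro!: prod.cong)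
    qed
    finally show ?thesis .
  qed
  show ?thesis unfolding eq
    by (intro polyfun_sum polyfun_prod ballI polyfun.mult polyfun.const polyfun.var finite_permutations) auto
qed

lemma det_inj:
  fixes M :: "nat \<Rightarrow> nat \<Rightarrow> complex"
  assumes "det (mat q q (\<lambda>(r,c). M r c)) \<noteq> 0" and "\<forall>r<q. (\<Sum>c<q. M r c * x c) = 0"
  shows "\<forall>c<q. x c = 0"
proof -
  let ?A = "mat q q (\<lambda>(r,c). M r c)"
  let ?v = "vec q x"
  have "?A *\<^sub>v ?v = 0\<^sub>v q"
  proof
    show "dim_vec (?A *\<^sub>v ?v) = dim_vec (0\<^sub>v q)" by simp
    fix r assume "r < dim_vec (0\<^sub>v q)"
    then have r: "r < q" by simp
    have "(?A *\<^sub>v ?v) $ r = (\<Sum>c<q. M r c * x c)"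
      using r by (simp add: scalar_prod_def lessThan_atLeast0 row_def)
    then show "(?A *\<^sub>v ?v) $ r = 0\<^sub>v q $ r" using assms(2) r by simp
  qed
  moreover have "?v \<in> carrier_vec q" by simp
  ultimately have "?v = 0\<^sub>v q" using det_0_iff_vec_prod_zero[of ?A q] assms(1) by (metis mat_carrier)
  then show ?thesis by (metis index_vec index_zero_vec(1))
qed



definition Yrow :: "nat \<Rightarrow> cmat \<Rightarrow> cmat \<Rightarrow> cmat \<Rightarrow> (nat \<Rightarrow> complex) \<Rightarrow> cvec \<Rightarrow> nat \<Rightarrow> complex" where
  "Yrow k AA BB CC D v r = mv (2*k) (Ablk k AA) v r + (\<Sum>l<k. BB r l * D l * mv (2*k) CC v l)"

lemma sum_split_add: "(\<Sum>s<a+(n::nat). f s) = (\<Sum>s<a. f s) + (\<Sum>s<n. f (a+s))"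
  by (induction n arbitrary: f) (auto simp: add.assoc)

lemma mv_lin2: "mv n M (\<lambda>s. x * u s + y * w s) l = x * mv n M u l + y * mv n M w l"
  by (simp add: mv_def sum.distrib sum_distrib_left algebra_simps)

lemma mv_add: "mv n M (\<lambda>s. u s + w s) l = mv n M u l + mv n M w l"
  by (simp add: mv_def sum.distrib algebra_simps)

lemma mv_sum: "finite S \<Longrightarrow> mv n M (\<lambda>s. \<Sum>c\<in>S. f c * v c s) l = (\<Sum>c\<in>S. f c * mv n M (v c) l)"
  unfolding mv_def by (simp add: sum_distrib_left algebra_simps sum.swap[of _ S])

lemma Yrow_lin2: "Yrow k AA BB CC D (\<lambda>s. x * u s + y * w s) r = x * Yrow k AA BB CC D u r + y * Yrow k AA BB CC D w r"
  by (simp add: Yrow_def mv_lin2 sum.distrib sum_distrib_left algebra_simps)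

lemma Yrow_sum: "finite S \<Longrightarrow> Yrow k AA BB CC D (\<lambda>s. \<Sum>c\<in>S. f c * v c s) r = (\<Sum>c\<in>S. f c * Yrow k AA BB CC D (v c) r)"
  by (simp add: Yrow_def mv_sum sum.distrib sum_distrib_left algebra_simps sum.swap[of _ S])

lemma Ymat_Yrow: "mv (2*k) (Ymat k AA BB CC h) w r = Yrow k AA BB CC (\<lambda>l. if l < h then 1 else 0) w r"
proof -
  have "mv (2*k) (Ymat k AA BB CC h) w r = mv (2*k) (Ablk k AA) w r + (\<Sum>l<min h k. BB r l * mv (2*k) CC w l)"
    by (simp add: mv_def Ymat_def sum.distrib distrib_right sum_distrib_left sum_distrib_right sum.swap[of _ "{..<min h k}"] algebra_simps)
  also have "(\<Sum>l<min h k. BB r l * mv (2*k) CC w l) = (\<Sum>l<k. BB r l * (if l < h then 1 else 0) * mv (2*k) CC w l)"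
  proof -
    have "(\<Sum>l<k. BB r l * (if l < h then 1 else 0) * mv (2*k) CC w l) = (\<Sum>l\<in>{l\<in>{..<k}. l < h}. BB r l * mv (2*k) CC w l)"
      by (simp add: sum.inter_filter[symmetric] if_distrib if_distribR cong: if_cong)
    also have "{l\<in>{..<k}. l < h} = {..<min h k}" by auto
    finally show ?thesis by simp
  qed
  finally show ?thesis by (simp add: Yrow_def)
qed

lemma ker_Yrow: "w \<in> ker_mat R (2*k) (Ymat k AA BB CC h) \<longleftrightarrow>
   w \<in> cspace (2*k) \<and> (\<forall>r<R. Yrow k AA BB CC (\<lambda>l. if l < h then 1 else 0) w r = 0)"
  by (simp add: ker_mat_def Ymat_Yrow)

lemma Ablk_eps:
  assumes "\<forall>l<k. eps l - eps (k + l) = 0"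
  shows "mv (2*k) (Ablk k AA) eps r = 0"
proof -
  have "mv (2*k) (Ablk k AA) eps r = (\<Sum>s<k. AA r s * eps s) + (\<Sum>s<k. - AA r s * eps (k+s))"
    unfolding mv_def mult_2 sum_split_add by (simp add: Ablk_def)
  also have "\<dots> = (\<Sum>s<k. AA r s * (eps s - eps (k+s)))"
    by (simp add: sum.distrib[symmetric] algebra_simps)
  also have "\<dots> = 0" using assms by simp
  finally show ?thesis .
qed

lemma sol_set_Yrow:
  assumes "\<forall>l<k. eps l - eps (k + l) = 0" and "\<forall>l<k. mv (2*k) CC eps l = - dd l"
  shows "sol_set k R AA BB CC dd j i \<tau> = {w \<in> cspace (2*k). \<forall>r<R.
     Yrow k AA BB CC (\<lambda>l. if l < j then 1 else if l < i then \<tau> else 0) (\<lambda>s. w s - eps s) r = 0}"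
proof -
  have "Yrow k AA BB CC D (\<lambda>s. w s - eps s) r = mv (2*k) (Ablk k AA) w r +
     (\<Sum>l<k. BB r l * D l * (mv (2*k) CC w l + dd l))" for D w r
  proof -
    have e: "(\<lambda>s. w s - eps s) = (\<lambda>s. 1 * w s + (-1) * eps s)" by simp
    show ?thesis unfolding Yrow_def e mv_lin2 using Ablk_eps[OF assms(1)] assms(2)
      by (auto intro!: sum.cong)
  qed
  then show ?thesis unfolding sol_set_def by simp
qed




lemma sum_window:
  assumes "i \<le> (k::nat)" "j \<le> i"
  shows "(\<Sum>l<k. (if j \<le> l \<and> l < i then g l else 0)) = (\<Sum>c<i-j. g (j+c))"
proof -
  have "(\<Sum>l<k. (if j \<le> l \<and> l < i then g l else 0)) = (\<Sum>l\<in>{l\<in>{..<k}. j \<le> l \<and> l < i}. g l)"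
    by (rule sum.inter_filter[symmetric]) simp
  also have "{l\<in>{..<k}. j \<le> l \<and> l < i} = (\<lambda>c. j + c) ` {..<i-j}"
  proof (intro equalityI subsetI)
    fix x assume "x \<in> {l\<in>{..<k}. j \<le> l \<and> l < i}"
    then show "x \<in> (\<lambda>c. j + c) ` {..<i-j}" by (intro image_eqI[of _ _ "x - j"]) auto
  qed (use assms in auto)
  also have "(\<Sum>l\<in>(\<lambda>c. j + c) ` {..<i-j}. g l) = (\<Sum>c<i-j. g (j+c))"
    by (subst sum.reindex) (auto simp: inj_on_def)
  finally show ?thesis .
qed




context
  fixes k R j i p q m :: nat and AA BB CC :: cmat and dd eps :: cvec and E F G :: cmat
  assumes ik: "i \<le> k" and ji: "j < i" and qdef: "q = i - j" and mdef: "m = p + q"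
    and eps_c: "eps \<in> cspace (2*k)" and eps1: "\<forall>l<k. eps l - eps (k + l) = 0"
    and eps2: "\<forall>l<k. mv (2*k) CC eps l = - dd l"
    and basI: "is_basis_of (ker_mat R (2*k) (Ymat k AA BB CC i)) (hcat_col (2*k) p E F) m"
    and basJ: "is_basis_of (ker_mat R (2*k) (Ymat k AA BB CC j)) (hcat_col (2*k) p E G) m"
    and pF: "PCF_cond k j i CC F" and pG: "PCF_cond k j i CC G"
    and injB: "\<forall>x. (\<forall>r<R. (\<Sum>c<q. BB r (j+c) * x c) = 0) \<longrightarrow> (\<forall>c<q. x c = 0)"
begin

definition "Zr v r = (\<Sum>c<q. BB r (j+c) * mv (2*k) CC v (j+c))"
definition "Dj = (\<lambda>l::nat. if l < j then 1 else (0::complex))"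

lemma YD: "Yrow k AA BB CC (\<lambda>l. if l < j then 1 else if l < i then \<tau> else 0) v r
   = Yrow k AA BB CC Dj v r + \<tau> * Zr v r"
proof -
  have "(\<Sum>l<k. BB r l * (if l < j then 1 else if l < i then \<tau> else 0) * mv (2*k) CC v l)
     = (\<Sum>l<k. BB r l * Dj l * mv (2*k) CC v l) + \<tau> * (\<Sum>l<k. (if j \<le> l \<and> l < i then BB r l * mv (2*k) CC v l else 0))"
    unfolding sum_distrib_left sum.distrib[symmetric] by (rule sum.cong) (auto simp: Dj_def algebra_simps)
  also have "(\<Sum>l<k. (if j \<le> l \<and> l < i then BB r l * mv (2*k) CC v l else 0)) = Zr v r"
    unfolding Zr_def unfolding qdef by (rule sum_window) (use ik ji in auto)
  finally show ?thesis by (simp add: Yrow_def)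
qed

lemma YDi: "Yrow k AA BB CC (\<lambda>l. if l < i then 1 else 0) v r = Yrow k AA BB CC Dj v r + Zr v r"
proof -
  have "(\<lambda>l. if l < i then 1 else 0) = (\<lambda>l. if l < j then 1 else if l < i then (1::complex) else 0)"
    using ji by auto
  then show ?thesis using YD[of 1] by simp
qed

lemma YDj: "Yrow k AA BB CC (\<lambda>l. if l < j then 1 else 0) v r = Yrow k AA BB CC Dj v r"
  by (simp add: Dj_def)

lemma mv_col: "mv (2*k) CC (Defs.col (2*k) M c) l = (\<Sum>s<2*k. CC l s * M s c)"
  unfolding mv_def Defs.col_def by (auto intro!: sum.cong)

lemma CF: "c < q \<Longrightarrow> c' < q \<Longrightarrow> mv (2*k) CC (Defs.col (2*k) F c) (j+c') = (if c' = c then 1 else 0)"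
proof -
  assume c: "c < q" and c': "c' < q"
  have r: "j+c' < k" "j \<le> j+c'" "j+c' < i" using c' ik ji qdef by auto
  have "(if j \<le> j+c' \<and> j+c' < i then (\<Sum>s<2*k. CC (j+c') s * F s c) else 0) = (if j+c' = j + c then 1 else 0)"
    using pF r(1) c qdef unfolding PCF_cond_def by blast
  then show ?thesis using r unfolding mv_col by simp
qed

lemma CG: "c < q \<Longrightarrow> c' < q \<Longrightarrow> mv (2*k) CC (Defs.col (2*k) G c) (j+c') = (if c' = c then 1 else 0)"
proof -
  assume c: "c < q" and c': "c' < q"
  have r: "j+c' < k" "j \<le> j+c'" "j+c' < i" using c' ik ji qdef by auto
  have "(if j \<le> j+c' \<and> j+c' < i then (\<Sum>s<2*k. CC (j+c') s * G s c) else 0) = (if j+c' = j + c then 1 else 0)"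
    using pG r(1) c qdef unfolding PCF_cond_def by blast
  then show ?thesis using r unfolding mv_col by simp
qed

lemma ZF: "c < q \<Longrightarrow> Zr (Defs.col (2*k) F c) r = BB r (j+c)"
  unfolding Zr_def by (simp add: CF if_distrib cong: if_cong)

lemma ZG: "c < q \<Longrightarrow> Zr (Defs.col (2*k) G c) r = BB r (j+c)"
  unfolding Zr_def by (simp add: CG if_distrib cong: if_cong)

lemma kerI_F: "c < q \<Longrightarrow> Defs.col (2*k) F c \<in> ker_mat R (2*k) (Ymat k AA BB CC i)"
proof -
  assume c: "c < q"
  have "hcat_col (2*k) p E F (p+c) \<in> ker_mat R (2*k) (Ymat k AA BB CC i)"
    using basI c mdef unfolding is_basis_of_def by auto
  then show ?thesis by (simp add: hcat_col_def)
qed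

lemma kerJ_G: "c < q \<Longrightarrow> Defs.col (2*k) G c \<in> ker_mat R (2*k) (Ymat k AA BB CC j)"
proof -
  assume c: "c < q"
  have "hcat_col (2*k) p E G (p+c) \<in> ker_mat R (2*k) (Ymat k AA BB CC j)"
    using basJ c mdef unfolding is_basis_of_def by auto
  then show ?thesis by (simp add: hcat_col_def)
qed

lemma kerI_E: "c < p \<Longrightarrow> Defs.col (2*k) E c \<in> ker_mat R (2*k) (Ymat k AA BB CC i)"
proof -
  assume c: "c < p"
  have "hcat_col (2*k) p E F c \<in> ker_mat R (2*k) (Ymat k AA BB CC i)"
    using basI c mdef unfolding is_basis_of_def by auto
  then show ?thesis using c by (simp add: hcat_col_def)
qed

lemma kerJ_E: "c < p \<Longrightarrow> Defs.col (2*k) E c \<in> ker_mat R (2*k) (Ymat k AA BB CC j)"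
proof -
  assume c: "c < p"
  have "hcat_col (2*k) p E G c \<in> ker_mat R (2*k) (Ymat k AA BB CC j)"
    using basJ c mdef unfolding is_basis_of_def by auto
  then show ?thesis using c by (simp add: hcat_col_def)
qed

lemma CE: "c < p \<Longrightarrow> c' < q \<Longrightarrow> mv (2*k) CC (Defs.col (2*k) E c) (j+c') = 0"
proof -
  assume c: "c < p" and c': "c' < q"
  have "\<forall>r<R. Zr (Defs.col (2*k) E c) r = 0"
  proof (intro allI impI)
    fix r assume "r < R"
    then have "Yrow k AA BB CC Dj (Defs.col (2*k) E c) r + Zr (Defs.col (2*k) E c) r = 0"
      "Yrow k AA BB CC Dj (Defs.col (2*k) E c) r = 0"
      using kerI_E[OF c] kerJ_E[OF c] unfolding ker_Yrow YDi YDj by auto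
    then show "Zr (Defs.col (2*k) E c) r = 0" by simp
  qed
  then have "\<forall>r<R. (\<Sum>c'<q. BB r (j+c') * (\<lambda>c'. mv (2*k) CC (Defs.col (2*k) E c) (j+c')) c') = 0"
    unfolding Zr_def by simp
  then show ?thesis using injB[rule_format, of "\<lambda>c'. mv (2*k) CC (Defs.col (2*k) E c) (j+c')"] c' by blast
qed

lemma YE: "c < p \<Longrightarrow> r < R \<Longrightarrow> Yrow k AA BB CC (\<lambda>l. if l < j then 1 else if l < i then \<tau> else 0) (Defs.col (2*k) E c) r = 0"
  using kerJ_E[of c] CE[of c] unfolding YD ker_Yrow YDj Zr_def by auto

lemma YF: "c < q \<Longrightarrow> r < R \<Longrightarrow> Yrow k AA BB CC Dj (Defs.col (2*k) F c) r = - BB r (j+c)"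
  using kerI_F[of c] ZF[of c r] unfolding ker_Yrow YDi by (auto simp: eq_neg_iff_add_eq_0)

lemma YG: "c < q \<Longrightarrow> r < R \<Longrightarrow> Yrow k AA BB CC Dj (Defs.col (2*k) G c) r = 0"
  using kerJ_G[of c] unfolding ker_Yrow YDj by auto


lemma main_eq:
  fixes \<gamma> :: complex and t :: real
  assumes sg: "of_real t + \<gamma> * of_real (1 - t) \<noteq> 0"
  shows "sol_set k R AA BB CC dd j i (of_real t / (of_real t + \<gamma> * of_real (1 - t))) =
     {Wfun (2*k) p q eps E F G \<gamma> t y | y. y \<in> cspace m}"
proof -
  define s where "s = of_real t + \<gamma> * of_real (1 - t)"
  define \<tau> where "\<tau> = of_real t / s"
  have s0: "s \<noteq> 0" using sg s_def by simp
  have ts: "\<tau> * s = of_real t" using s0 \<tau>_def by simp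
  define D where "D = (\<lambda>l. if l < j then 1 else if l < i then \<tau> else 0)"
  define H where "H c = (\<lambda>r. of_real t * Defs.col (2*k) F c r + (\<gamma> * of_real (1 - t)) * Defs.col (2*k) G c r)" for c
  define V where "V c = (if c < p then Defs.col (2*k) E c else H (c - p))" for c
  have YH: "Yrow k AA BB CC D (H c) r = 0" if c: "c < q" and r: "r < R" for c r
  proof -
    have "Yrow k AA BB CC D (H c) r = of_real t * (- BB r (j+c) + \<tau> * BB r (j+c)) + (\<gamma> * of_real (1 - t)) * (0 + \<tau> * BB r (j+c))"
      unfolding H_def Yrow_lin2 D_def YD using YF[OF c r] YG[OF c r] ZF[OF c] ZG[OF c] by simp
    also have "\<dots> = BB r (j+c) * (\<tau> * s - of_real t)" unfolding s_def by (simp add: algebra_simps)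
    finally show ?thesis using ts by simp
  qed
  have CH: "mv (2*k) CC (H c) (j+c') = (if c' = c then s else 0)" if "c < q" "c' < q" for c c'
    unfolding H_def mv_lin2 using CF[OF that] CG[OF that] s_def by simp
  have YV: "Yrow k AA BB CC D (V c) r = 0" if "c < m" "r < R" for c r
    using YH[of "c - p" r] YE[of c r \<tau>] that mdef unfolding V_def D_def by auto
  have Weq: "Wfun (2*k) p q eps E F G \<gamma> t y = (\<lambda>r. eps r + (\<Sum>c<m. y c * V c r))" for y
  proof
    fix r show "Wfun (2*k) p q eps E F G \<gamma> t y r = eps r + (\<Sum>c<m. y c * V c r)"
    proof (cases "r < 2*k")
      case True
      then show ?thesis unfolding Wfun_def mdef sum_split_add V_def H_def
        by (simp add: Defs.col_def algebra_simps)
    next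
      case False
      then show ?thesis using eps_c unfolding Wfun_def V_def H_def cspace_def
        by (auto simp: Defs.col_def intro!: sum.neutral)
    qed
  qed
  have solD: "sol_set k R AA BB CC dd j i \<tau> = {w \<in> cspace (2*k). \<forall>r<R. Yrow k AA BB CC D (\<lambda>s. w s - eps s) r = 0}"
    unfolding D_def by (rule sol_set_Yrow[OF eps1 eps2])
  show ?thesis
    unfolding s_def[symmetric] \<tau>_def[symmetric] solD
  proof (intro equalityI subsetI)
    fix w assume "w \<in> {Wfun (2*k) p q eps E F G \<gamma> t y | y. y \<in> cspace m}"
    then obtain y where w: "w = Wfun (2*k) p q eps E F G \<gamma> t y" by blast
    have "w \<in> cspace (2*k)" unfolding w Wfun_def cspace_def by simp
    moreover have "Yrow k AA BB CC D (\<lambda>s. w s - eps s) r = 0" if "r < R" for r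
    proof -
      have "(\<lambda>s. w s - eps s) = (\<lambda>s. \<Sum>c\<in>{..<m}. y c * V c s)" unfolding w Weq by simp
      then show ?thesis using YV that by (simp add: Yrow_sum)
    qed
    ultimately show "w \<in> {w \<in> cspace (2*k). \<forall>r<R. Yrow k AA BB CC D (\<lambda>s. w s - eps s) r = 0}" by blast
  next
    fix w assume "w \<in> {w \<in> cspace (2*k). \<forall>r<R. Yrow k AA BB CC D (\<lambda>s. w s - eps s) r = 0}"
    then have wc: "w \<in> cspace (2*k)" and wY: "\<forall>r<R. Yrow k AA BB CC D (\<lambda>s. w s - eps s) r = 0" by auto
    define w' where "w' = (\<lambda>s. w s - eps s)"
    define cv where "cv c = mv (2*k) CC w' (j+c)" for c
    define u where "u = (\<lambda>r. 1 * w' r + (-1) * (\<Sum>c\<in>{..<q}. (cv c / s) * H c r))"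
    have Cu: "mv (2*k) CC u (j+c') = 0" if c': "c' < q" for c'
    proof -
      have "mv (2*k) CC u (j+c') = cv c' - (\<Sum>c\<in>{..<q}. (cv c / s) * (if c' = c then s else 0))"
        unfolding u_def mv_lin2 mv_sum[OF finite_lessThan] using CH c' cv_def by simp
      also have "\<dots> = 0" using c' s0 by (simp add: if_distrib cong: if_cong)
      finally show ?thesis .
    qed
    have Yu: "Yrow k AA BB CC D u r = 0" if "r < R" for r
      unfolding u_def Yrow_lin2 Yrow_sum[OF finite_lessThan] using wY YH that w'_def by simp
    have uc: "u \<in> cspace (2*k)"
      using wc eps_c unfolding u_def w'_def H_def cspace_def by (simp add: Defs.col_def)
    have uJ: "u \<in> ker_mat R (2*k) (Ymat k AA BB CC j)"
    proof -
      have "Zr u r = 0" for r unfolding Zr_def using Cu by simp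
      then show ?thesis unfolding ker_Yrow YDj using uc Yu unfolding D_def YD by simp
    qed
    then obtain \<alpha> where \<alpha>: "u = (\<lambda>r. \<Sum>l<m. \<alpha> l * hcat_col (2*k) p E G l r)"
      using basJ unfolding is_basis_of_def by blast
    have usplit: "u = (\<lambda>r. (\<Sum>l<p. \<alpha> l * Defs.col (2*k) E l r) + (\<Sum>c<q. \<alpha> (p+c) * Defs.col (2*k) G c r))"
      unfolding \<alpha> mdef sum_split_add hcat_col_def by simp
    have a0: "\<alpha> (p+c) = 0" if c: "c < q" for c
    proof -
      have "mv (2*k) CC u (j+c) = (\<Sum>l<p. \<alpha> l * 0) + (\<Sum>c'<q. \<alpha> (p+c') * (if c = c' then 1 else 0))"
        apply (subst usplit)
        unfolding mv_add mv_sum[OF finite_lessThan] using CE[OF _ c] CG[OF _ c] by simp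
      then show ?thesis using Cu[OF c] c by (simp add: if_distrib cong: if_cong)
    qed
    have uE: "u = (\<lambda>r. \<Sum>l<p. \<alpha> l * Defs.col (2*k) E l r)"
    proof -
      have "(\<Sum>c<q. \<alpha> (p+c) * Defs.col (2*k) G c r) = 0" for r using a0 by simp
      then show ?thesis by (subst usplit) simp
    qed
    define y where "y l = (if l < p then \<alpha> l else if l < m then cv (l - p) / s else 0)" for l
    have yc: "y \<in> cspace m" unfolding y_def cspace_def using mdef by simp
    have "w = Wfun (2*k) p q eps E F G \<gamma> t y"
    proof
      fix r
      have "w r = eps r + u r + (\<Sum>c<q. (cv c / s) * H c r)" unfolding u_def w'_def by simp
      also have "\<dots> = eps r + (\<Sum>c<m. y c * V c r)"
        unfolding uE mdef sum_split_add y_def V_def by (simp add: mdef)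
      finally show "w r = Wfun (2*k) p q eps E F G \<gamma> t y r" unfolding Weq by simp
    qed
    then show "w \<in> {Wfun (2*k) p q eps E F G \<gamma> t y | y. y \<in> cspace m}" using yc by blast
  qed
qed

end

theorem lemma2p3:
  fixes k a b hs h0 i j :: nat and A B :: "(nat \<Rightarrow> complex) set"
  assumes "k \<ge> 1"
    and "irred_alg k A" and "irred_alg k B"
    and "alg_dim k A = int a" and "alg_dim k B = int b" and "b \<le> a"
    and "hs \<le> b" and "alg_dim k (A \<inter> B) < int hs"
    and "int a + int b - int k \<le> int h0"
    and "\<forall>Z. irred_component k (A \<inter> B) Z \<longrightarrow> int h0 \<le> alg_dim k Z"
    and "h0 \<le> j" and "j < i" and "i \<le> hs"
  shows "generic (\<lambda>\<sigma>.
    let AA = (\<lambda>r c. \<sigma> (VA r c)); BB = (\<lambda>r c. \<sigma> (VB r c));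
        CC = (\<lambda>r c. \<sigma> (VC r c)); dd = (\<lambda>l. \<sigma> (VD l));
        m = 2*k - a - b; p = m - (i - j)
    in \<forall>eps E F G.
        eps \<in> cspace (2*k) \<and> (\<forall>l<k. eps l - eps (k + l) = 0) \<and>
        (\<forall>l<k. mv (2*k) CC eps l = - dd l) \<and>
        is_basis_of (ker_mat (a+b) (2*k) (Ymat k AA BB CC i)) (hcat_col (2*k) p E F) m \<and>
        is_basis_of (ker_mat (a+b) (2*k) (Ymat k AA BB CC j)) (hcat_col (2*k) p E G) m \<and>
        PCF_cond k j i CC F \<and> PCF_cond k j i CC G
      \<longrightarrow> finite {\<gamma>::complex. cmod \<gamma> = 1 \<and> \<not> (\<forall>t::real. 0 \<le> t \<and> t \<le> 1 \<longrightarrow>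
             (\<exists>\<tau>. (t \<noteq> 0 \<longrightarrow> \<tau> \<noteq> 0) \<and>
                sol_set k (a+b) AA BB CC dd j i \<tau> =
                  {Wfun (2*k) p (i - j) eps E F G \<gamma> t y | y. y \<in> cspace m}))})"
proof (cases "i \<le> k")
  case True
  define q where "q = i - j"
  define P where "P = (\<lambda>\<sigma>::pvar \<Rightarrow> complex. det (mat q q (\<lambda>(r,c). \<sigma> (VB r (j+c)))))"
  have qab: "q \<le> a + b" using assms q_def by simp
  have qm: "q \<le> 2*k - a - b" using assms True q_def by linarith
  show ?thesis unfolding generic_def
  proof (intro exI[of _ P] conjI allI impI)
    show "polyfun UNIV P" unfolding P_def by (rule det_polyfun)
    define \<sigma>0 where "\<sigma>0 = (\<lambda>v. case v of VB r l \<Rightarrow> if l = j + r then 1 else 0 | _ \<Rightarrow> (0::complex))"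
    have "mat q q (\<lambda>(r,c). \<sigma>0 (VB r (j+c))) = 1\<^sub>m q"
      unfolding one_mat_def \<sigma>0_def by (rule cong[OF refl]) auto
    then show "\<exists>\<sigma>. P \<sigma> \<noteq> 0" unfolding P_def by (intro exI[of _ \<sigma>0]) simp
  next
    fix \<sigma> assume P0: "P \<sigma> \<noteq> 0"
    show "let AA = (\<lambda>r c. \<sigma> (VA r c)); BB = (\<lambda>r c. \<sigma> (VB r c));
        CC = (\<lambda>r c. \<sigma> (VC r c)); dd = (\<lambda>l. \<sigma> (VD l));
        m = 2*k - a - b; p = m - (i - j)
    in \<forall>eps E F G.
        eps \<in> cspace (2*k) \<and> (\<forall>l<k. eps l - eps (k + l) = 0) \<and>
        (\<forall>l<k. mv (2*k) CC eps l = - dd l) \<and>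
        is_basis_of (ker_mat (a+b) (2*k) (Ymat k AA BB CC i)) (hcat_col (2*k) p E F) m \<and>
        is_basis_of (ker_mat (a+b) (2*k) (Ymat k AA BB CC j)) (hcat_col (2*k) p E G) m \<and>
        PCF_cond k j i CC F \<and> PCF_cond k j i CC G
      \<longrightarrow> finite {\<gamma>::complex. cmod \<gamma> = 1 \<and> \<not> (\<forall>t::real. 0 \<le> t \<and> t \<le> 1 \<longrightarrow>
             (\<exists>\<tau>. (t \<noteq> 0 \<longrightarrow> \<tau> \<noteq> 0) \<and>
                sol_set k (a+b) AA BB CC dd j i \<tau> =
                  {Wfun (2*k) p (i - j) eps E F G \<gamma> t y | y. y \<in> cspace m}))}"
      unfolding Let_def
    proof (intro allI impI)
      fix eps E F G
      let ?AA = "\<lambda>r c. \<sigma> (VA r c)" and ?BB = "\<lambda>r c. \<sigma> (VB r c)" and ?CC = "\<lambda>r c. \<sigma> (VC r c)"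
        and ?dd = "\<lambda>l. \<sigma> (VD l)"
      let ?m = "2*k - a - b"
      assume H: "eps \<in> cspace (2*k) \<and> (\<forall>l<k. eps l - eps (k + l) = 0) \<and>
        (\<forall>l<k. mv (2*k) ?CC eps l = - ?dd l) \<and>
        is_basis_of (ker_mat (a+b) (2*k) (Ymat k ?AA ?BB ?CC i)) (hcat_col (2*k) (?m - (i - j)) E F) ?m \<and>
        is_basis_of (ker_mat (a+b) (2*k) (Ymat k ?AA ?BB ?CC j)) (hcat_col (2*k) (?m - (i - j)) E G) ?m \<and>
        PCF_cond k j i ?CC F \<and> PCF_cond k j i ?CC G"
      have injB: "\<forall>x. (\<forall>r<a+b. (\<Sum>c<q. ?BB r (j+c) * x c) = 0) \<longrightarrow> (\<forall>c<q. x c = 0)"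
      proof (rule allI, rule impI)
        fix x assume "\<forall>r<a+b. (\<Sum>c<q. ?BB r (j+c) * x c) = 0"
        then have "\<forall>r<q. (\<Sum>c<q. ?BB r (j+c) * x c) = 0" using qab by auto
        then show "\<forall>c<q. x c = 0"
          using det_inj[of q "\<lambda>r c. \<sigma> (VB r (j+c))" x] P0 unfolding P_def by simp
      qed
      have mq: "?m = (?m - q) + q" using qm by simp
      have key: "sol_set k (a+b) ?AA ?BB ?CC ?dd j i (of_real t / (of_real t + \<gamma> * of_real (1 - t))) =
          {Wfun (2*k) (?m - q) q eps E F G \<gamma> t y | y. y \<in> cspace ?m}"
        if "of_real t + \<gamma> * of_real (1 - t) \<noteq> 0" for \<gamma> t
        by (rule main_eq[OF True \<open>j < i\<close> q_def mq _ _ _ _ _ _ _ injB that]) (use H q_def in auto)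
      have "{\<gamma>::complex. cmod \<gamma> = 1 \<and> \<not> (\<forall>t::real. 0 \<le> t \<and> t \<le> 1 \<longrightarrow>
             (\<exists>\<tau>. (t \<noteq> 0 \<longrightarrow> \<tau> \<noteq> 0) \<and>
                sol_set k (a+b) ?AA ?BB ?CC ?dd j i \<tau> =
                  {Wfun (2*k) (?m - (i - j)) (i - j) eps E F G \<gamma> t y | y. y \<in> cspace ?m}))} \<subseteq> {-1}"
      proof
        fix \<gamma> :: complex
        assume g: "\<gamma> \<in> {\<gamma>::complex. cmod \<gamma> = 1 \<and> \<not> (\<forall>t::real. 0 \<le> t \<and> t \<le> 1 \<longrightarrow>
             (\<exists>\<tau>. (t \<noteq> 0 \<longrightarrow> \<tau> \<noteq> 0) \<and>
                sol_set k (a+b) ?AA ?BB ?CC ?dd j i \<tau> =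
                  {Wfun (2*k) (?m - (i - j)) (i - j) eps E F G \<gamma> t y | y. y \<in> cspace ?m}))}"
        then have g1: "cmod \<gamma> = 1" by simp
        show "\<gamma> \<in> {-1}"
        proof (rule ccontr)
          assume "\<gamma> \<notin> {-1}"
          then have gm: "\<gamma> \<noteq> -1" by simp
          have "\<forall>t::real. 0 \<le> t \<and> t \<le> 1 \<longrightarrow>
             (\<exists>\<tau>. (t \<noteq> 0 \<longrightarrow> \<tau> \<noteq> 0) \<and>
                sol_set k (a+b) ?AA ?BB ?CC ?dd j i \<tau> =
                  {Wfun (2*k) (?m - (i - j)) (i - j) eps E F G \<gamma> t y | y. y \<in> cspace ?m})"
          proof (intro allI impI)
            fix t :: real assume t: "0 \<le> t \<and> t \<le> 1"
            have s0: "of_real t + \<gamma> * of_real (1 - t) \<noteq> 0"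
            proof
              assume s: "of_real t + \<gamma> * of_real (1 - t) = 0"
              then have "\<gamma> * of_real (1 - t) = - of_real t" by (metis add.commute eq_neg_iff_add_eq_0)
              then have "cmod (\<gamma> * of_real (1 - t)) = cmod (of_real t)" by (metis norm_minus_cancel)
              then have "cmod \<gamma> * cmod (of_real (1 - t) :: complex) = cmod (of_real t :: complex)" by (simp only: norm_mult)
              moreover have "cmod (of_real (1 - t) :: complex) = 1 - t" using t by (metis abs_of_nonneg diff_ge_0_iff_ge norm_of_real)
              moreover have "cmod (of_real t :: complex) = t" using t by (metis abs_of_nonneg norm_of_real)
              ultimately have "1 - t = t" using g1 by simp
              then have tt: "t = 1/2" by simp
              have e1: "(of_real (1 - t) :: complex) = of_real t" by (simp only: \<open>1 - t = t\<close>)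
              have "(1 + \<gamma>) * of_real t = 0" using s unfolding e1 by (simp add: distrib_right)
              then have "1 + \<gamma> = 0" using tt by simp
              then have "\<gamma> = -1" by (simp add: eq_neg_iff_add_eq_0 add.commute)
              then show False using gm by simp
            qed
            show "\<exists>\<tau>. (t \<noteq> 0 \<longrightarrow> \<tau> \<noteq> 0) \<and>
                sol_set k (a+b) ?AA ?BB ?CC ?dd j i \<tau> =
                  {Wfun (2*k) (?m - (i - j)) (i - j) eps E F G \<gamma> t y | y. y \<in> cspace ?m}"
              using key[OF s0] s0 unfolding q_def by (intro exI[of _ "of_real t / (of_real t + \<gamma> * of_real (1 - t))"]) auto
          qed
          then show False using g unfolding mem_Collect_eq by blast
        qed
      qed
      then show "finite {\<gamma>::complex. cmod \<gamma> = 1 \<and> \<not> (\<forall>t::real. 0 \<le> t \<and> t \<le> 1 \<longrightarrow>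
             (\<exists>\<tau>. (t \<noteq> 0 \<longrightarrow> \<tau> \<noteq> 0) \<and>
                sol_set k (a+b) ?AA ?BB ?CC ?dd j i \<tau> =
                  {Wfun (2*k) (?m - (i - j)) (i - j) eps E F G \<gamma> t y | y. y \<in> cspace ?m}))}"
        using finite_subset by blast
    qed
  qed
next
  case False
  have m0: "2*k - a - b = 0" using assms(6,7,13) False by linarith
  show ?thesis unfolding generic_def
  proof (rule exI[of _ "\<lambda>_. 1"], intro conjI allI impI)
    show "polyfun UNIV (\<lambda>_::pvar \<Rightarrow> complex. 1)" by (rule polyfun.const)
    show "\<exists>\<sigma>::pvar \<Rightarrow> complex. (1::complex) \<noteq> 0" by simp
  next
    fix \<sigma> :: "pvar \<Rightarrow> complex"
    show "let AA = (\<lambda>r c. \<sigma> (VA r c)); BB = (\<lambda>r c. \<sigma> (VB r c));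
        CC = (\<lambda>r c. \<sigma> (VC r c)); dd = (\<lambda>l. \<sigma> (VD l));
        m = 2*k - a - b; p = m - (i - j)
    in \<forall>eps E F G.
        eps \<in> cspace (2*k) \<and> (\<forall>l<k. eps l - eps (k + l) = 0) \<and>
        (\<forall>l<k. mv (2*k) CC eps l = - dd l) \<and>
        is_basis_of (ker_mat (a+b) (2*k) (Ymat k AA BB CC i)) (hcat_col (2*k) p E F) m \<and>
        is_basis_of (ker_mat (a+b) (2*k) (Ymat k AA BB CC j)) (hcat_col (2*k) p E G) m \<and>
        PCF_cond k j i CC F \<and> PCF_cond k j i CC G
      \<longrightarrow> finite {\<gamma>::complex. cmod \<gamma> = 1 \<and> \<not> (\<forall>t::real. 0 \<le> t \<and> t \<le> 1 \<longrightarrow>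
             (\<exists>\<tau>. (t \<noteq> 0 \<longrightarrow> \<tau> \<noteq> 0) \<and>
                sol_set k (a+b) AA BB CC dd j i \<tau> =
                  {Wfun (2*k) p (i - j) eps E F G \<gamma> t y | y. y \<in> cspace m}))}"
      unfolding Let_def m0
    proof (intro allI impI)
      fix eps E F G
      let ?AA = "\<lambda>r c. \<sigma> (VA r c)" and ?BB = "\<lambda>r c. \<sigma> (VB r c)" and ?CC = "\<lambda>r c. \<sigma> (VC r c)"
        and ?dd = "\<lambda>l. \<sigma> (VD l)"
      assume H: "eps \<in> cspace (2*k) \<and> (\<forall>l<k. eps l - eps (k + l) = 0) \<and>
        (\<forall>l<k. mv (2*k) ?CC eps l = - ?dd l) \<and>
        is_basis_of (ker_mat (a+b) (2*k) (Ymat k ?AA ?BB ?CC i)) (hcat_col (2*k) (0 - (i - j)) E F) 0 \<and>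
        is_basis_of (ker_mat (a+b) (2*k) (Ymat k ?AA ?BB ?CC j)) (hcat_col (2*k) (0 - (i - j)) E G) 0 \<and>
        PCF_cond k j i ?CC F \<and> PCF_cond k j i ?CC G"
      have Hc: "eps \<in> cspace (2*k)" using H by blast
      have H1: "\<forall>l<k. eps l - eps (k + l) = 0" using H by blast
      have H2: "\<forall>l<k. mv (2*k) ?CC eps l = - ?dd l" using H by blast
      have HB: "is_basis_of (ker_mat (a+b) (2*k) (Ymat k ?AA ?BB ?CC i)) (hcat_col (2*k) (0 - (i - j)) E F) 0"
        using H by blast
      have ker0: "w = (\<lambda>r. 0)" if w: "w \<in> ker_mat (a+b) (2*k) (Ymat k ?AA ?BB ?CC i)" for w
      proof -
        have "\<forall>w\<in>ker_mat (a+b) (2*k) (Ymat k ?AA ?BB ?CC i). \<exists>c. w = (\<lambda>r. \<Sum>l<0. c l * hcat_col (2*k) (0 - (i - j)) E F l r)"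
          using HB unfolding is_basis_of_def by blast
        then obtain c where "w = (\<lambda>r. \<Sum>l<0. c l * hcat_col (2*k) (0 - (i - j)) E F l r)" using w by blast
        then show ?thesis by simp
      qed
      have D1: "(\<lambda>l. if l < j then 1 else if l < i then (1::complex) else 0) = (\<lambda>l. if l < i then 1 else 0)"
        using \<open>j < i\<close> by auto
      have sol: "sol_set k (a+b) ?AA ?BB ?CC ?dd j i 1 = {eps}"
      proof -
        have "sol_set k (a+b) ?AA ?BB ?CC ?dd j i 1 = {w \<in> cspace (2*k). \<forall>r<a+b.
            Yrow k ?AA ?BB ?CC (\<lambda>l. if l < j then 1 else if l < i then 1 else 0) (\<lambda>s. w s - eps s) r = 0}"
          by (rule sol_set_Yrow[OF H1 H2])
        also have "\<dots> = {w \<in> cspace (2*k). \<forall>r<a+b.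
            Yrow k ?AA ?BB ?CC (\<lambda>l. if l < i then 1 else 0) (\<lambda>s. w s - eps s) r = 0}"
          unfolding D1 ..
        also have "\<dots> = {eps}"
        proof (intro equalityI subsetI)
          fix w assume w: "w \<in> {w \<in> cspace (2*k). \<forall>r<a+b.
            Yrow k ?AA ?BB ?CC (\<lambda>l. if l < i then 1 else 0) (\<lambda>s. w s - eps s) r = 0}"
          then have wc: "w \<in> cspace (2*k)" and wY: "\<forall>r<a+b.
            Yrow k ?AA ?BB ?CC (\<lambda>l. if l < i then 1 else 0) (\<lambda>s. w s - eps s) r = 0" by auto
          have "(\<lambda>s. w s - eps s) \<in> cspace (2*k)" using wc Hc unfolding cspace_def by simp
          then have "(\<lambda>s. w s - eps s) \<in> ker_mat (a+b) (2*k) (Ymat k ?AA ?BB ?CC i)"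
            unfolding ker_Yrow using wY by blast
          then have "(\<lambda>s. w s - eps s) = (\<lambda>r. 0)" by (rule ker0)
          then have "\<forall>s. w s - eps s = 0" by (metis (mono_tags))
          then have "w = eps" by (simp add: fun_eq_iff)
          then show "w \<in> {eps}" by simp
        next
          fix w assume "w \<in> {eps}"
          then have we: "w = eps" by simp
          have "Yrow k ?AA ?BB ?CC D (\<lambda>s. 0) r = 0" for D r
            by (simp add: Yrow_def mv_def)
          then show "w \<in> {w \<in> cspace (2*k). \<forall>r<a+b.
            Yrow k ?AA ?BB ?CC (\<lambda>l. if l < i then 1 else 0) (\<lambda>s. w s - eps s) r = 0}"
            using Hc unfolding we by simp
        qed
        finally show ?thesis .
      qed
      have W: "{Wfun (2*k) (0 - (i - j)) (i - j) eps E F G \<gamma> t y | y. y \<in> cspace 0} = {eps}" for \<gamma> t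
      proof -
        have Wy: "Wfun (2*k) (0 - (i - j)) (i - j) eps E F G \<gamma> t y = eps" if "y \<in> cspace 0" for y
        proof
          fix r
          have y0: "y = (\<lambda>_. 0)" using that unfolding cspace_def by auto
          show "Wfun (2*k) (0 - (i - j)) (i - j) eps E F G \<gamma> t y r = eps r"
            using Hc unfolding Wfun_def cspace_def y0 by simp
        qed
        have z: "(\<lambda>_. 0) \<in> cspace 0" unfolding cspace_def by simp
        show ?thesis
        proof (intro equalityI subsetI)
          fix x assume "x \<in> {Wfun (2*k) (0 - (i - j)) (i - j) eps E F G \<gamma> t y | y. y \<in> cspace 0}"
          then obtain y where "x = Wfun (2*k) (0 - (i - j)) (i - j) eps E F G \<gamma> t y" "y \<in> cspace 0" by blast
          then show "x \<in> {eps}" using Wy by simp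
        next
          fix x assume "x \<in> {eps}"
          then have "x = Wfun (2*k) (0 - (i - j)) (i - j) eps E F G \<gamma> t (\<lambda>_. 0)" using Wy[OF z] by simp
          then show "x \<in> {Wfun (2*k) (0 - (i - j)) (i - j) eps E F G \<gamma> t y | y. y \<in> cspace 0}" using z by blast
        qed
      qed
      have emp: "{\<gamma>::complex. cmod \<gamma> = 1 \<and> \<not> (\<forall>t::real. 0 \<le> t \<and> t \<le> 1 \<longrightarrow>
             (\<exists>\<tau>. (t \<noteq> 0 \<longrightarrow> \<tau> \<noteq> 0) \<and>
                sol_set k (a+b) ?AA ?BB ?CC ?dd j i \<tau> =
                  {Wfun (2*k) (0 - (i - j)) (i - j) eps E F G \<gamma> t y | y. y \<in> cspace 0}))} = {}"
      proof -
        have "sol_set k (a+b) ?AA ?BB ?CC ?dd j i 1 =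
                  {Wfun (2*k) (0 - (i - j)) (i - j) eps E F G \<gamma> t y | y. y \<in> cspace 0}" for \<gamma> t
          unfolding sol W ..
        then have "\<forall>t::real. 0 \<le> t \<and> t \<le> 1 \<longrightarrow>
             (\<exists>\<tau>. (t \<noteq> 0 \<longrightarrow> \<tau> \<noteq> 0) \<and>
                sol_set k (a+b) ?AA ?BB ?CC ?dd j i \<tau> =
                  {Wfun (2*k) (0 - (i - j)) (i - j) eps E F G \<gamma> t y | y. y \<in> cspace 0})" for \<gamma>
          by (intro allI impI exI[of _ 1] conjI) simp_all
        then show ?thesis by blast
      qed
      then show "finite {\<gamma>::complex. cmod \<gamma> = 1 \<and> \<not> (\<forall>t::real. 0 \<le> t \<and> t \<le> 1 \<longrightarrow>
             (\<exists>\<tau>. (t \<noteq> 0 \<longrightarrow> \<tau> \<noteq> 0) \<and>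
                sol_set k (a+b) ?AA ?BB ?CC ?dd j i \<tau> =
                  {Wfun (2*k) (0 - (i - j)) (i - j) eps E F G \<gamma> t y | y. y \<in> cspace 0}))}"
        unfolding emp by simp
    qed
  qed
qed

end
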